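(* Let $B$ be a block of a graph $\mathcal{G}$. If every vertex of $B$ has finite degree and for each pair of vertices $(a,b)$ of $B$ there are only finitely many distinct simple paths in $\mathcal{G}$ joining $a$ to $b$, then $B$ is finite.
   Context: A vertex $a$ of a graph is a cutvertex if there are two other vertices in its connected component such that every path joining them passes through $a$. A block of a graph is a maximal connected subgraph that has no cutvertex. *)

theory Defs
  imports Main
begin

definition graph :: "'a set \<Rightarrow> ('a \<Rightarrow> 'a \<Rightarrow> bool) \<Rightarrow> bool" where
  "graph V E \<longleftrightarrow> (\<forall>x y. E x y \<longrightarrow> E y x) \<and> (\<forall>x. \<not> E x x)
     \<and> (\<forall>x y. E x y \<longrightarrow> x \<in> V \<and> y \<in> V)"

definition is_path :: "'a set \<Rightarrow> ('a \<Rightarrow> 'a \<Rightarrow> bool) \<Rightarrow> 'a list \<Rightarrow> bool" where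
  "is_path V E p \<longleftrightarrow> p \<noteq> [] \<and> set p \<subseteq> V \<and> distinct p \<and> successively E p"

definition joins :: "'a list \<Rightarrow> 'a \<Rightarrow> 'a \<Rightarrow> bool" where
  "joins p a b \<longleftrightarrow> hd p = a \<and> last p = b"

definition paths_between :: "'a set \<Rightarrow> ('a \<Rightarrow> 'a \<Rightarrow> bool) \<Rightarrow> 'a \<Rightarrow> 'a \<Rightarrow> 'a list set" where
  "paths_between V E a b = {p. is_path V E p \<and> joins p a b}"

definition connected_by :: "'a set \<Rightarrow> ('a \<Rightarrow> 'a \<Rightarrow> bool) \<Rightarrow> 'a \<Rightarrow> 'a \<Rightarrow> bool" where
  "connected_by V E a b \<longleftrightarrow> paths_between V E a b \<noteq> {}"

definition connected_graph :: "'a set \<Rightarrow> ('a \<Rightarrow> 'a \<Rightarrow> bool) \<Rightarrow> bool" where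
  "connected_graph V E \<longleftrightarrow> V \<noteq> {} \<and> (\<forall>a\<in>V. \<forall>b\<in>V. connected_by V E a b)"

definition cutvertex :: "'a set \<Rightarrow> ('a \<Rightarrow> 'a \<Rightarrow> bool) \<Rightarrow> 'a \<Rightarrow> bool" where
  "cutvertex V E a \<longleftrightarrow> a \<in> V \<and> (\<exists>x\<in>V. \<exists>y\<in>V. x \<noteq> a \<and> y \<noteq> a \<and> x \<noteq> y \<and>
      connected_by V E a x \<and> connected_by V E a y \<and>
      (\<forall>p\<in>paths_between V E x y. a \<in> set p))"

definition subgraph :: "'a set \<Rightarrow> ('a \<Rightarrow> 'a \<Rightarrow> bool) \<Rightarrow> 'a set \<Rightarrow> ('a \<Rightarrow> 'a \<Rightarrow> bool) \<Rightarrow> bool" where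
  "subgraph W F V E \<longleftrightarrow> graph W F \<and> W \<subseteq> V \<and> (\<forall>x y. F x y \<longrightarrow> E x y)"

definition no_cutvertex :: "'a set \<Rightarrow> ('a \<Rightarrow> 'a \<Rightarrow> bool) \<Rightarrow> bool" where
  "no_cutvertex V E \<longleftrightarrow> (\<forall>a. \<not> cutvertex V E a)"

definition is_block :: "'a set \<Rightarrow> ('a \<Rightarrow> 'a \<Rightarrow> bool) \<Rightarrow> 'a set \<Rightarrow> ('a \<Rightarrow> 'a \<Rightarrow> bool) \<Rightarrow> bool" where
  "is_block W F V E \<longleftrightarrow> subgraph W F V E \<and> connected_graph W F \<and> no_cutvertex W F \<and>
     (\<forall>W' F'. subgraph W' F' V E \<and> connected_graph W' F' \<and> no_cutvertex W' F' \<and>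
        W \<subseteq> W' \<and> (\<forall>x y. F x y \<longrightarrow> F' x y) \<longrightarrow> W' = W \<and> F' = F)"

definition degree_finite :: "('a \<Rightarrow> 'a \<Rightarrow> bool) \<Rightarrow> 'a \<Rightarrow> bool" where
  "degree_finite E v \<longleftrightarrow> finite {w. E v w}"

end

theory Submission
  imports Defs
begin

lemma reroute:
  assumes sym: "\<forall>x y. F x y \<longrightarrow> F y x"
    and p: "distinct p" "successively F p" "set p \<subseteq> W" "p \<noteq> []"
    and r: "distinct r" "successively F r" "set r \<subseteq> W" "r \<noteq> []"
    and wp: "w \<in> set p" and vp: "v \<notin> set p" and wv: "F w v" and hr: "hd r = v"
    and lr: "last r \<in> set p" and wr: "w \<notin> set r"
  shows "\<exists>p'. distinct p' \<and> successively F p' \<and> set p' \<subseteq> W \<and> p' \<noteq> [] \<and>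
           hd p' = hd p \<and> last p' = last p \<and> v \<in> set p'"
proof -
  have "\<exists>y\<in>set r. y \<in> set p" using lr r(4) by auto
  then obtain r1 x r2 where rr: "r = r1 @ x # r2" and xp: "x \<in> set p"
    and r1p: "\<forall>y\<in>set r1. y \<notin> set p"
    using split_list_first_prop[of r "\<lambda>y. y \<in> set p"] by blast
  have r1ne: "r1 \<noteq> []" using rr hr vp xp by (cases r1) auto
  have hr1: "hd r1 = v" using rr hr r1ne by simp
  have sr1: "successively F r1" "F (last r1) x"
    using r(2) rr r1ne by (auto simp: successively_append_iff)
  have dr1: "distinct r1" using r(1) rr by simp
  have Wr1: "set r1 \<subseteq> W" using r(3) rr by auto
  have xW: "x \<in> W" using xp p(3) by auto
  have wx: "w \<noteq> x" using wr rr by auto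
  obtain p1 p2 where pp: "p = p1 @ x # p2" using xp split_list by metis
  have sp: "successively F p1" "successively F (x # p2)"
    using p(2) pp by (auto simp: successively_append_iff)
  have dj: "set r1 \<inter> set p = {}" using r1p by auto
  have srev: "successively F (rev r1)" using sr1(1) sym
    by (simp add: successively_rev) (metis successively_mono)
  from wp wx pp consider "w \<in> set p1" | "w \<in> set p2" by auto
  then show ?thesis
  proof cases
    case 1
    then obtain p11 p12 where p1: "p1 = p11 @ w # p12" using split_list by metis
    define p' where "p' = p11 @ w # r1 @ x # p2"
    have "successively F (p11 @ [w])" using sp(1) p1
      by (metis append.assoc append_Cons append_Nil successively_append_iff)
    moreover have "successively F (r1 @ x # p2)" using sr1 sp(2) r1ne
      by (auto simp: successively_append_iff)
    then have "successively F (w # (r1 @ x # p2))" using wv hr1 r1ne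
      by (cases r1) auto
    ultimately have "successively F p'" unfolding p'_def
      by (auto simp: successively_append_iff)
    moreover have "distinct p'" using p(1) dr1 dj unfolding p'_def pp p1 by auto
    moreover have "set p' \<subseteq> W" using p(3) Wr1 unfolding p'_def pp p1 by auto
    moreover have "hd p' = hd p" unfolding p'_def pp p1 by (cases p11) auto
    moreover have "last p' = last p" unfolding p'_def pp p1 by simp
    moreover have "v \<in> set p'" unfolding p'_def using hr1 r1ne by (cases r1) auto
    ultimately show ?thesis by (intro exI[of _ p']) (simp add: p'_def)
  next
    case 2
    then obtain p21 p22 where p2: "p2 = p21 @ w # p22" using split_list by metis
    define p' where "p' = p1 @ x # rev r1 @ w # p22"
    have "successively F (p1 @ [x])" using p(2) pp
      by (metis append.assoc append_Cons append_Nil successively_append_iff)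
    moreover have "successively F (x # rev r1)" using srev sr1(2) sym r1ne
      by (cases "rev r1") (auto simp: hd_rev)
    moreover have "successively F (w # p22)" using sp(2) p2
      by (metis append_Cons successively_append_iff)
    moreover have "successively F (rev r1 @ w # p22)" using srev wv sym hr1 r1ne calculation(3)
      by (auto simp: successively_append_iff last_rev)
    ultimately have "successively F (x # rev r1 @ w # p22)" using r1ne
      by (cases "rev r1") (auto simp: hd_rev)
    with \<open>successively F (p1 @ [x])\<close> have "successively F p'" unfolding p'_def
      by (auto simp: successively_append_iff)
    moreover have "distinct p'" using p(1) dr1 dj unfolding p'_def pp p2 by auto
    moreover have "set p' \<subseteq> W" using p(3) Wr1 unfolding p'_def pp p2 by auto
    moreover have "hd p' = hd p" unfolding p'_def pp p2 by (cases p1) auto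
    moreover have "last p' = last p" unfolding p'_def pp p2 by simp
    moreover have "v \<in> set p'" unfolding p'_def using hr1 r1ne by (cases r1) auto
    ultimately show ?thesis by (intro exI[of _ p']) (simp add: p'_def)
  qed
qed

lemma walk_cover:
  assumes g: "graph W F" and conn: "connected_graph W F" and nc: "no_cutvertex W F"
    and aW: "a \<in> W"
  shows "q \<noteq> [] \<Longrightarrow> hd q = a \<Longrightarrow> successively F q \<Longrightarrow> set q \<subseteq> W \<Longrightarrow> v \<in> set q \<Longrightarrow>
     v = a \<or> (\<exists>c p. F a c \<and> is_path W F p \<and> hd p = a \<and> last p = c \<and> v \<in> set p)"
proof (induction q arbitrary: v rule: rev_induct)
  case Nil
  then show ?case by simp
next
  case (snoc u q)
  have sym: "\<forall>x y. F x y \<longrightarrow> F y x" and irr: "\<forall>x. \<not> F x x" using g by (auto simp: graph_def)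
  show ?case
  proof (cases "q = []")
    case True
    then show ?thesis using snoc by simp
  next
    case qne: False
    have IH: "\<And>v. v \<in> set q \<Longrightarrow> v = a \<or> (\<exists>c p. F a c \<and> is_path W F p \<and> hd p = a \<and> last p = c \<and> v \<in> set p)"
      using snoc.IH snoc.prems qne by (auto simp: successively_append_iff)
    show ?thesis
    proof (cases "v \<in> set q")
      case True then show ?thesis using IH by blast
    next
      case False
      then have vu: "v = u" using snoc.prems by auto
      show ?thesis
      proof (cases "u \<in> set q")
        case True then show ?thesis using IH vu by blast
      next
        case uq: False
        define w where "w = last q"
        have wq: "w \<in> set q" using qne by (simp add: w_def)
        have Fwu: "F w u" using snoc.prems(3) qne by (auto simp: successively_append_iff w_def)
        have aq: "a \<in> set q" using snoc.prems(2) qne by (cases q) auto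
        have uW: "u \<in> W" and wW: "w \<in> W" using snoc.prems wq by auto
        have ua: "u \<noteq> a" using aq uq by auto
        have uw: "u \<noteq> w" using wq uq by auto
        show ?thesis
        proof (cases "w = a")
          case wa: True
          have "is_path W F [a, u]" using Fwu wa ua aW uW by (simp add: is_path_def)
          then show ?thesis using Fwu wa vu by fastforce
        next
          case wa: False
          then have "\<exists>c p. F a c \<and> is_path W F p \<and> hd p = a \<and> last p = c \<and> w \<in> set p"
            using IH[OF wq] by blast
          then obtain c p where p: "F a c" "is_path W F p" "hd p = a" "last p = c" "w \<in> set p" by blast
          show ?thesis
          proof (cases "u \<in> set p")
            case True then show ?thesis using p vu by blast
          next
            case up: False
            have "\<not> cutvertex W F w" using nc by (simp add: no_cutvertex_def)
            moreover have "connected_by W F w u" "connected_by W F w a"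
              using conn uW wW aW by (auto simp: connected_graph_def)
            ultimately obtain R where R: "R \<in> paths_between W F u a" "w \<notin> set R"
              using wW uW aW ua uw not_sym[OF wa] unfolding cutvertex_def by blast
            have pp: "distinct p" "successively F p" "set p \<subseteq> W" "p \<noteq> []"
              using p(2) by (auto simp: is_path_def)
            have rr: "distinct R" "successively F R" "set R \<subseteq> W" "R \<noteq> []" "hd R = u" "last R = a"
              using R(1) by (auto simp: is_path_def paths_between_def joins_def)
            have "last R \<in> set p" using rr(6) p(3) pp(4) hd_in_set by metis
            from reroute[OF sym pp rr(1-4) p(5) up Fwu rr(5) this R(2)]
            obtain p' where "distinct p' \<and> successively F p' \<and> set p' \<subseteq> W \<and> p' \<noteq> [] \<and>
              hd p' = hd p \<and> last p' = last p \<and> u \<in> set p'" by blast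
            then show ?thesis using p vu by (auto simp: is_path_def)
          qed
        qed
      qed
    qed
  qed
qed


theorem mainTheorem8:
  fixes V :: "'a set" and E :: "'a \<Rightarrow> 'a \<Rightarrow> bool"
    and W :: "'a set" and F :: "'a \<Rightarrow> 'a \<Rightarrow> bool"
  assumes "graph V E"
    and "is_block W F V E"
    and "\<forall>v\<in>W. degree_finite E v"
    and "\<forall>a\<in>W. \<forall>b\<in>W. finite (paths_between V E a b)"
  shows "finite W"
proof -
  have g: "graph W F" and WV: "W \<subseteq> V" and FE: "\<And>x y. F x y \<Longrightarrow> E x y"
    and conn: "connected_graph W F" and nc: "no_cutvertex W F"
    using assms(2) by (auto simp: is_block_def subgraph_def)
  obtain a where aW: "a \<in> W" using conn by (auto simp: connected_graph_def)
  let ?C = "{c. E a c} \<inter> W"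
  have sub: "W \<subseteq> insert a (\<Union>c\<in>?C. \<Union> (set ` paths_between V E a c))"
  proof
    fix v assume vW: "v \<in> W"
    then have "connected_by W F a v" using conn aW by (auto simp: connected_graph_def)
    then obtain q where q: "is_path W F q" "hd q = a" "last q = v"
      by (auto simp: connected_by_def paths_between_def joins_def)
    have "v \<in> set q" using q by (auto simp: is_path_def)
    then have "v = a \<or> (\<exists>c p. F a c \<and> is_path W F p \<and> hd p = a \<and> last p = c \<and> v \<in> set p)"
      using walk_cover[OF g conn nc aW, of q v] q by (auto simp: is_path_def)
    then show "v \<in> insert a (\<Union>c\<in>?C. \<Union> (set ` paths_between V E a c))"
    proof
      assume "\<exists>c p. F a c \<and> is_path W F p \<and> hd p = a \<and> last p = c \<and> v \<in> set p"
      then obtain c p where cp: "F a c" "is_path W F p" "hd p = a" "last p = c" "v \<in> set p" by blast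
      have "c \<in> W" using cp(1) g by (auto simp: graph_def)
      moreover have "E a c" using FE cp(1) .
      moreover have "is_path V E p" using cp(2) WV FE
        by (auto simp: is_path_def elim: successively_mono)
      ultimately show ?thesis using cp by (auto simp: paths_between_def joins_def)
    qed simp
  qed
  have "finite ?C" using assms(3) aW by (auto simp: degree_finite_def)
  moreover have "\<And>c. c \<in> ?C \<Longrightarrow> finite (\<Union> (set ` paths_between V E a c))"
    using assms(4) aW by auto
  ultimately have "finite (insert a (\<Union>c\<in>?C. \<Union> (set ` paths_between V E a c)))" by auto
  then show ?thesis using sub finite_subset by blast
qed

end
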